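(* Suppose $(b,s) = 1$, $r | b^{\infty}$ (all prime factors of $r$ divide $b$), and $a_m$ is an arbitrary finite sequence of complex numbers. Then \begin{equation*} \sum_{\substack{x \bmod b \\ (x,b)=1}} \Big|\sum_{m \geq 1} a_m S(0, m;s) S(rx,m;br)\Big|^2 \leq br^2 s \sum_{\substack{x \bmod bs \\ (x,bs)=1}} \Big|\sum_{m \equiv 0 \bmod r} a_m e\Big(\frac{x m/r}{bs}\Big)\Big|^2, \end{equation*} where $S(a,b;c)$ denotes the classical Kloosterman sum and $e(x)=e^{2\pi i x}$. *)

theory Defs
  imports "HOL-Analysis.Analysis" "HOL-Number_Theory.Number_Theory"
begin

definition e :: "real \<Rightarrow> complex" where
  "e x = exp (2 * pi * \<i> * complex_of_real x)"

definition modinv :: "int \<Rightarrow> nat \<Rightarrow> int" where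
  "modinv x c = (SOME y. 0 \<le> y \<and> y < int c \<and> [x * y = 1] (mod int c))"

definition kloosterman :: "int \<Rightarrow> int \<Rightarrow> nat \<Rightarrow> complex" where
  "kloosterman a n c =
     (\<Sum>x\<in>{x\<in>{0..<int c}. coprime x (int c)}.
        e (real_of_int (a * x + n * modinv x c) / real c))"

end

theory Submission
  imports Defs
begin

lemma e_add: "e (x + y) = e x * e y"
  unfolding e_def by (simp add: distrib_left exp_add)

lemma e_int: "e (real_of_int k) = 1"
  unfolding e_def using exp_2pi_1_int[of k] by (simp add: mult_ac)

lemma e_shift: "e (x + real_of_int k) = e x"
  by (simp add: e_add e_int)

lemma cnj_e: "cnj (e x) = e (- x)"
  unfolding e_def by (simp add: exp_cnj)

lemma e_eq_1: "e x = 1 \<Longrightarrow> x \<in> \<int>"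
proof -
  assume "e x = 1"
  then obtain n where "2 * pi * x = real_of_int (2*n) * pi"
    unfolding e_def exp_eq_1 by auto
  then have "x = of_int n" by simp
  then show ?thesis by simp
qed

lemma e_cong:
  assumes "c > 0" "[u = v] (mod int c)"
  shows "e (real_of_int u / real c) = e (real_of_int v / real c)"
proof -
  obtain k where k: "u = v + int c * k"
    using assms(2) by (metis cong_iff_lin cong_sym)
  have "real_of_int u / real c = real_of_int v / real c + real_of_int k"
    using assms(1) by (simp add: k field_simps)
  then show ?thesis by (simp add: e_shift)
qed

lemma e_pow: "e (real_of_int d / real c) ^ t = e (real_of_int (d * int t) / real c)"
proof (induction t)
  case 0 then show ?case by (simp add: e_def)
next
  case (Suc t)
  have "real_of_int (d * int (Suc t)) / real c = real_of_int d / real c + real_of_int (d * int t) / real c"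
    by (simp add: add_divide_distrib algebra_simps)
  then show ?case using Suc by (simp add: e_add)
qed

lemma geom_e:
  assumes "c > 0"
  shows "(\<Sum>t\<in>{0..<int c}. e (real_of_int (d * t) / real c)) = (if int c dvd d then of_nat c else 0)"
proof -
  have img: "int ` {..<c} = {0..<int c}"
    using image_int_atLeastLessThan[of 0 c] by (simp add: atLeast0LessThan)
  have "(\<Sum>t\<in>{0..<int c}. e (real_of_int (d * t) / real c)) = (\<Sum>t<c. e (real_of_int (d * int t) / real c))"
    by (simp add: img[symmetric] sum.reindex)
  also have "\<dots> = (\<Sum>t<c. e (real_of_int d / real c) ^ t)"
    by (simp add: e_pow)
  also have "\<dots> = (if int c dvd d then of_nat c else 0)"
  proof (cases "int c dvd d")
    case True
    then obtain k where "d = int c * k" by auto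
    then have "e (real_of_int d / real c) = 1" using assms by (simp add: e_int)
    then show ?thesis using True by simp
  next
    case False
    have ne: "e (real_of_int d / real c) \<noteq> 1"
    proof
      assume "e (real_of_int d / real c) = 1"
      then obtain k where "real_of_int d / real c = of_int k" using e_eq_1 Ints_cases by blast
      then have "d = int c * k" using assms by (simp add: field_simps) (metis of_int_eq_iff of_int_mult of_int_of_nat_eq)
      then show False using False by auto
    qed
    have "e (real_of_int d / real c) ^ c = 1"
      using assms by (simp add: e_pow e_int)
    then show ?thesis using False ne by (simp add: geometric_sum)
  qed
  finally show ?thesis .
qed


definition U :: "nat \<Rightarrow> int set" where
  "U c = {x\<in>{0..<int c}. coprime x (int c)}"

lemma finite_U[simp]: "finite (U c)" unfolding U_def by (rule finite_subset[of _ "{0..<int c}"]) auto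

lemma card_U_le: "card (U c) \<le> c"
proof -
  have "card (U c) \<le> card {0..<int c}" unfolding U_def by (rule card_mono) auto
  then show ?thesis by simp
qed

lemma modinv:
  assumes "c > 0" "coprime x (int c)"
  shows "0 \<le> modinv x c \<and> modinv x c < int c \<and> [x * modinv x c = 1] (mod int c)"
proof -
  obtain y where y: "[x * y = 1] (mod int c)" using cong_solve_coprime_int assms(2) by blast
  have "0 \<le> y mod int c \<and> y mod int c < int c \<and> [x * (y mod int c) = 1] (mod int c)"
  proof (intro conjI)
    show "0 \<le> y mod int c" "y mod int c < int c" using assms(1) by auto
    have "[x * (y mod int c) = x * y] (mod int c)" by (intro cong_mult cong_refl) (simp add: cong_def)
    then show "[x * (y mod int c) = 1] (mod int c)" using y by (rule cong_trans)
  qed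
  then show ?thesis unfolding modinv_def by (rule someI)
qed

lemma inv_unique:
  fixes x y y' m :: int
  assumes "[x * y = 1] (mod m)" "[x * y' = 1] (mod m)"
    "0 \<le> y" "y < m" "0 \<le> y'" "y' < m"
  shows "y = y'"
proof -
  have "[y * (x * y') = y' * (x * y)] (mod m)" by (simp add: mult_ac)
  moreover have "[y * (x * y') = y] (mod m)" using cong_mult[OF cong_refl assms(2), of y] by simp
  moreover have "[y' * (x * y) = y'] (mod m)" using cong_mult[OF cong_refl assms(1), of y'] by simp
  ultimately have "[y = y'] (mod m)" by (meson cong_sym cong_trans)
  then show ?thesis using assms cong_less_imp_eq_int[of y m y'] by blast
qed

lemma modinv_U:
  assumes "c > 0" "x \<in> U c"
  shows "modinv x c \<in> U c" "[x * modinv x c = 1] (mod int c)"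
proof -
  have m: "0 \<le> modinv x c \<and> modinv x c < int c \<and> [x * modinv x c = 1] (mod int c)"
    using modinv assms by (auto simp: U_def)
  then show "[x * modinv x c = 1] (mod int c)" by blast
  have "coprime (modinv x c) (int c)"
  proof -
    have "coprime (x * modinv x c) (int c)" using m cong_imp_coprime cong_sym by (metis coprime_1_left)
    then show ?thesis by simp
  qed
  then show "modinv x c \<in> U c" using m by (auto simp: U_def)
qed

lemma modinv_invol:
  assumes "c > 0" "x \<in> U c"
  shows "modinv (modinv x c) c = x"
proof -
  have a: "modinv x c \<in> U c" "[x * modinv x c = 1] (mod int c)" using modinv_U assms by auto
  have b: "modinv (modinv x c) c \<in> U c" "[modinv x c * modinv (modinv x c) c = 1] (mod int c)"
    using modinv_U[OF assms(1) a(1)] by auto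
  have "[modinv x c * x = 1] (mod int c)" using a by (simp add: mult.commute)
  then show ?thesis using inv_unique[OF b(2)] b(1) assms(2) by (auto simp: U_def)
qed

lemma modinv_inj:
  assumes "c > 0" "x \<in> U c" "y \<in> U c" "modinv x c = modinv y c"
  shows "x = y"
  using modinv_invol assms by metis


lemma coprime_r:
  fixes z :: int and b r :: nat
  assumes "r > 0" "\<forall>p. prime p \<and> p dvd r \<longrightarrow> p dvd b" "coprime z (int b)"
  shows "coprime z (int r)"
proof (rule ccontr)
  assume nc: "\<not> coprime z (int r)"
  define g where "g = nat (gcd z (int r))"
  have "gcd z (int r) \<noteq> 1" using nc coprime_iff_gcd_eq_1 by blast
  moreover have "gcd z (int r) \<ge> 0" by simp
  ultimately have "g \<noteq> 1" unfolding g_def by linarith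
  then obtain p where p: "prime p" "p dvd g" using prime_factor_nat by blast
  have gd: "int g = gcd z (int r)" unfolding g_def by simp
  have "int p dvd int g" using p(2) by simp
  then have pg: "int p dvd gcd z (int r)" using gd by simp
  have "int p dvd z" using pg gcd_dvd1 dvd_trans by blast
  have "int p dvd int r" using pg gcd_dvd2 dvd_trans by blast
  then have "p dvd r" by simp
  then have "p dvd b" using assms(2) p(1) by simp
  then have "int p dvd int b" by simp
  then have "is_unit (int p)" using assms(3) \<open>int p dvd z\<close> coprime_common_divisor by blast
  then show False using p(1) by simp
qed

lemma coprime_br:
  fixes z :: int and b r :: nat
  assumes "r > 0" "\<forall>p. prime p \<and> p dvd r \<longrightarrow> p dvd b"
  shows "coprime z (int (b * r)) \<longleftrightarrow> coprime z (int b)"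
  using coprime_r[OF assms] by auto

lemma modinv_mod:
  assumes "b > 0" "r > 0" "z \<in> U (b * r)" "coprime (z mod int b) (int b)"
  shows "modinv z (b * r) mod int b = modinv (z mod int b) b"
proof -
  have br: "b * r > 0" using assms by simp
  have y: "[z * modinv z (b*r) = 1] (mod int (b*r))" using modinv_U[OF br assms(3)] by simp
  then have y1: "[z * modinv z (b*r) = 1] (mod int b)" using cong_dvd_modulus by (metis dvd_triv_left of_nat_mult)
  have "[(z mod int b) * (modinv z (b * r) mod int b) = z * modinv z (b*r)] (mod int b)"
    by (intro cong_mult) (simp_all add: cong_def)
  then have a: "[(z mod int b) * (modinv z (b * r) mod int b) = 1] (mod int b)" using y1 cong_trans by blast
  have u: "z mod int b \<in> U b" using assms by (auto simp: U_def)
  have m: "modinv (z mod int b) b \<in> U b" "[(z mod int b) * modinv (z mod int b) b = 1] (mod int b)"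
    using modinv_U[OF assms(1) u] by auto
  show ?thesis using inv_unique[OF a m(2)] m(1) assms(1) by (auto simp: U_def)
qed

lemma split_U:
  fixes f :: "int \<Rightarrow> complex"
  assumes "b > 0" "r > 0" "\<forall>p. prime p \<and> p dvd r \<longrightarrow> p dvd b"
  shows "(\<Sum>z\<in>U (b*r). f z) = (\<Sum>z0\<in>U b. \<Sum>t\<in>{0..<int r}. f (z0 + int b * t))"
proof -
  have "(\<Sum>z0\<in>U b. \<Sum>t\<in>{0..<int r}. f (z0 + int b * t)) = (\<Sum>p\<in>U b \<times> {0..<int r}. f (fst p + int b * snd p))"
    by (simp add: sum.cartesian_product case_prod_beta)
  also have "\<dots> = (\<Sum>z\<in>U (b*r). f z)"
  proof (rule sym, rule sum.reindex_bij_witness[where j = "\<lambda>z. (z mod int b, z div int b)" and i = "\<lambda>p. fst p + int b * snd p"])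
    fix z assume z: "z \<in> U (b*r)"
    show "fst (z mod int b, z div int b) + int b * snd (z mod int b, z div int b) = z" by simp
    have z': "0 \<le> z" "z < int (b*r)" "coprime z (int (b*r))" using z by (simp_all add: U_def)
    have zr: "0 \<le> z" "z < int b * int r" "coprime z (int b)"
      using z' coprime_br[OF assms(2,3), of z] by simp_all
    have "coprime (z mod int b) (int b)" using zr(3) assms(1) by simp
    moreover have "z div int b < int r"
    proof (rule ccontr)
      assume "\<not> z div int b < int r"
      then have "int r * int b \<le> z div int b * int b" by (intro mult_right_mono) auto
      moreover have "z div int b * int b \<le> z"
        using div_mult_mod_eq[of z "int b"] pos_mod_sign[of "int b" z] assms(1) by linarith
      ultimately show False using zr(2) by (simp add: mult.commute)
    qed
    moreover have "0 \<le> z mod int b" "z mod int b < int b" "0 \<le> z div int b"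
      using zr(1) assms(1) by (simp_all add: pos_imp_zdiv_nonneg_iff)
    ultimately show "(z mod int b, z div int b) \<in> U b \<times> {0..<int r}"
      unfolding U_def by simp
    show "f (fst (z mod int b, z div int b) + int b * snd (z mod int b, z div int b)) = f z" by simp
  next
    fix p assume p: "p \<in> U b \<times> {0..<int r}"
    obtain z0 t where pz: "p = (z0, t)" by (cases p)
    have h: "0 \<le> z0" "z0 < int b" "coprime z0 (int b)" "0 \<le> t" "t < int r" using p pz by (auto simp: U_def)
    have d1: "(z0 + int b * t) div int b = t" using h assms(1) by simp
    have d2: "(z0 + int b * t) mod int b = z0" using h assms(1) by simp
    show "((fst p + int b * snd p) mod int b, (fst p + int b * snd p) div int b) = p"
      using d1 d2 pz by simp
    have "t + 1 \<le> int r" using h by simp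
    then have "int b * (t + 1) \<le> int b * int r" using assms(1) by (intro mult_left_mono) auto
    then have lt: "z0 + int b * t < int b * int r" using h by (simp add: algebra_simps)
    have mm: "(z0 + int b * t) mod int b = z0 mod int b" by simp
    have "coprime (z0 + int b * t) (int b)"
      using coprime_mod_left_iff[of "int b" "z0 + int b * t"] coprime_mod_left_iff[of "int b" z0] mm h(3) assms(1) by simp
    then have "coprime (z0 + int b * t) (int (b*r))" using coprime_br[OF assms(2,3)] by blast
    then show "fst p + int b * snd p \<in> U (b*r)"
      using h lt pz unfolding U_def by simp
  qed
  finally show ?thesis by simp
qed


lemma kl_split:
  assumes "b > 0" "r > 0" "\<forall>p. prime p \<and> p dvd r \<longrightarrow> p dvd b"
  shows "kloosterman (int r * x) (int m) (b*r) = (if r dvd m then of_nat r else 0) *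
     (\<Sum>z0\<in>U b. e (real_of_int (x * modinv z0 b) / real b) * e (real_of_int (int m * z0) / real (b*r)))"
proof -
  have br: "b * r > 0" using assms by simp
  define F where "F z0 = e (real_of_int (x * modinv z0 b) / real b)" for z0
  have "kloosterman (int r * x) (int m) (b*r) =
     (\<Sum>y\<in>U (b*r). e (real_of_int (int r * x * y + int m * modinv y (b*r)) / real (b*r)))"
    unfolding kloosterman_def U_def by simp
  also have "\<dots> = (\<Sum>z\<in>U (b*r). e (real_of_int (int r * x * modinv z (b*r) + int m * z) / real (b*r)))"
  proof (rule sum.reindex_bij_witness[where i = "\<lambda>z. modinv z (b*r)" and j = "\<lambda>z. modinv z (b*r)"])
    fix a assume a: "a \<in> U (b*r)"
    show "modinv (modinv a (b*r)) (b*r) = a" by (rule modinv_invol[OF br a])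
    show "modinv a (b*r) \<in> U (b*r)" by (rule modinv_U(1)[OF br a])
    show "e (real_of_int (int r * x * modinv (modinv a (b*r)) (b*r) + int m * modinv a (b*r)) / real (b*r)) =
          e (real_of_int (int r * x * a + int m * modinv a (b*r)) / real (b*r))"
      by (simp only: modinv_invol[OF br a])
  next
    fix a assume a: "a \<in> U (b*r)"
    show "modinv (modinv a (b*r)) (b*r) = a" by (rule modinv_invol[OF br a])
    show "modinv a (b*r) \<in> U (b*r)" by (rule modinv_U(1)[OF br a])
  qed
  also have "\<dots> = (\<Sum>z\<in>U (b*r). F (z mod int b) * e (real_of_int (int m * z) / real (b*r)))"
  proof (rule sum.cong[OF refl])
    fix z assume z: "z \<in> U (b*r)"
    have cz: "coprime (z mod int b) (int b)" using z coprime_br[OF assms(2,3)] assms(1) by (simp add: U_def)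
    have "real_of_int (int r * x * modinv z (b*r) + int m * z) / real (b*r)
       = real_of_int (x * modinv z (b*r)) / real b + real_of_int (int m * z) / real (b*r)"
      using assms(1,2) by (simp add: field_simps)
    then have "e (real_of_int (int r * x * modinv z (b*r) + int m * z) / real (b*r))
       = e (real_of_int (x * modinv z (b*r)) / real b) * e (real_of_int (int m * z) / real (b*r))"
      by (simp add: e_add)
    also have "e (real_of_int (x * modinv z (b*r)) / real b) = e (real_of_int (x * (modinv z (b*r) mod int b)) / real b)"
      by (rule e_cong[OF assms(1)]) (intro cong_mult cong_refl, simp add: cong_def)
    also have "\<dots> = F (z mod int b)" unfolding F_def using modinv_mod[OF assms(1,2) z cz] by simp
    finally show "e (real_of_int (int r * x * modinv z (b*r) + int m * z) / real (b*r)) =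
       F (z mod int b) * e (real_of_int (int m * z) / real (b*r))" .
  qed
  also have "\<dots> = (\<Sum>z0\<in>U b. \<Sum>t\<in>{0..<int r}. F ((z0 + int b * t) mod int b) * e (real_of_int (int m * (z0 + int b * t)) / real (b*r)))"
    by (rule split_U[OF assms])
  also have "\<dots> = (\<Sum>z0\<in>U b. F z0 * e (real_of_int (int m * z0) / real (b*r)) * (\<Sum>t\<in>{0..<int r}. e (real_of_int (int m * t) / real r)))"
  proof (rule sum.cong[OF refl])
    fix z0 assume z0: "z0 \<in> U b"
    have "(z0 + int b * t) mod int b = z0" for t using z0 by (simp add: U_def)
    moreover have "e (real_of_int (int m * (z0 + int b * t)) / real (b*r)) =
        e (real_of_int (int m * z0) / real (b*r)) * e (real_of_int (int m * t) / real r)" for t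
    proof -
      have "real_of_int (int m * (z0 + int b * t)) / real (b*r) = real_of_int (int m * z0) / real (b*r) + real_of_int (int m * t) / real r"
        using assms(1,2) by (simp add: field_simps)
      then show ?thesis by (simp add: e_add)
    qed
    ultimately show "(\<Sum>t\<in>{0..<int r}. F ((z0 + int b * t) mod int b) * e (real_of_int (int m * (z0 + int b * t)) / real (b*r)))
       = F z0 * e (real_of_int (int m * z0) / real (b*r)) * (\<Sum>t\<in>{0..<int r}. e (real_of_int (int m * t) / real r))"
      by (simp add: sum_distrib_left mult_ac)
  qed
  also have "\<dots> = (\<Sum>z0\<in>U b. F z0 * e (real_of_int (int m * z0) / real (b*r))) * (\<Sum>t\<in>{0..<int r}. e (real_of_int (int m * t) / real r))"
    by (rule sum_distrib_right[symmetric])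
  also have "\<dots> = (if r dvd m then of_nat r else 0) *
     (\<Sum>z0\<in>U b. F z0 * e (real_of_int (int m * z0) / real (b*r)))"
    unfolding geom_e[OF assms(2), of "int m"] int_dvd_int_iff by (simp only: mult.commute)
  finally show ?thesis unfolding F_def .
qed


lemma ortho:
  fixes c :: "'j \<Rightarrow> complex" and \<phi> :: "'j \<Rightarrow> int"
  assumes b: "b > 0" and fin: "finite J" and rng: "\<forall>j\<in>J. 0 \<le> \<phi> j \<and> \<phi> j < int b" and inj: "inj_on \<phi> J"
  shows "(\<Sum>x\<in>{0..<int b}. (cmod (\<Sum>j\<in>J. e (real_of_int (x * \<phi> j) / real b) * c j))\<^sup>2)
         = real b * (\<Sum>j\<in>J. (cmod (c j))\<^sup>2)"
proof -
  define E where "E x j = e (real_of_int (x * \<phi> j) / real b)" for x j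
  have EE: "E x j * cnj (E x k) = e (real_of_int ((\<phi> j - \<phi> k) * x) / real b)" for x j k
  proof -
    have h: "real_of_int (x * \<phi> j) / real b + - (real_of_int (x * \<phi> k) / real b) = real_of_int ((\<phi> j - \<phi> k) * x) / real b"
      by (simp add: diff_divide_distrib algebra_simps)
    show ?thesis by (simp only: E_def cnj_e e_add[symmetric] h)
  qed
  have G: "(\<Sum>x\<in>{0..<int b}. e (real_of_int ((\<phi> j - \<phi> k) * x) / real b)) = (if j = k then of_nat b else 0)"
    if "j \<in> J" "k \<in> J" for j k
  proof -
    have "int b dvd (\<phi> j - \<phi> k) \<longleftrightarrow> j = k"
    proof
      assume "int b dvd (\<phi> j - \<phi> k)"
      then have "[\<phi> j = \<phi> k] (mod int b)" by (simp add: cong_iff_dvd_diff)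
      then have "\<phi> j = \<phi> k" using rng that cong_less_imp_eq_int by blast
      then show "j = k" using inj that by (meson inj_onD)
    qed simp
    then show ?thesis using geom_e[OF b, of "\<phi> j - \<phi> k"] by simp
  qed
  have "complex_of_real (\<Sum>x\<in>{0..<int b}. (cmod (\<Sum>j\<in>J. E x j * c j))\<^sup>2)
      = (\<Sum>x\<in>{0..<int b}. (\<Sum>j\<in>J. E x j * c j) * cnj (\<Sum>k\<in>J. E x k * c k))"
    by (simp only: of_real_sum complex_norm_square)
  also have "\<dots> = (\<Sum>x\<in>{0..<int b}. \<Sum>j\<in>J. \<Sum>k\<in>J. c j * cnj (c k) * (E x j * cnj (E x k)))"
    by (simp add: cnj_sum sum_product mult_ac)
  also have "\<dots> = (\<Sum>j\<in>J. \<Sum>k\<in>J. c j * cnj (c k) * (\<Sum>x\<in>{0..<int b}. E x j * cnj (E x k)))"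
    by (simp add: sum_distrib_left sum.swap[of _ "{0..<int b}"])
  also have "\<dots> = (\<Sum>j\<in>J. \<Sum>k\<in>J. c j * cnj (c k) * (if j = k then of_nat b else 0))"
  proof (intro sum.cong refl)
    fix j k assume jk: "j \<in> J" "k \<in> J"
    show "c j * cnj (c k) * (\<Sum>x\<in>{0..<int b}. E x j * cnj (E x k)) = c j * cnj (c k) * (if j = k then of_nat b else 0)"
      by (simp only: EE G[OF jk])
  qed
  also have "\<dots> = (\<Sum>j\<in>J. of_nat b * (c j * cnj (c j)))"
  proof (rule sum.cong[OF refl])
    fix j assume "j \<in> J"
    have "(\<Sum>k\<in>J. c j * cnj (c k) * (if j = k then of_nat b else 0)) = (\<Sum>k\<in>J. if k = j then c j * cnj (c k) * of_nat b else 0)"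
      by (intro sum.cong refl) auto
    also have "\<dots> = c j * cnj (c j) * of_nat b" using \<open>j \<in> J\<close> fin by (simp add: sum.delta)
    finally show "(\<Sum>k\<in>J. c j * cnj (c k) * (if j = k then of_nat b else 0)) = of_nat b * (c j * cnj (c j))"
      by (simp add: mult_ac)
  qed
  also have "\<dots> = complex_of_real (real b * (\<Sum>j\<in>J. (cmod (c j))\<^sup>2))"
    by (simp only: of_real_mult of_real_sum complex_norm_square sum_distrib_left of_real_of_nat_eq)
  finally show ?thesis unfolding E_def using of_real_eq_iff by blast
qed

lemma cs_sum:
  fixes f :: "'a \<Rightarrow> complex"
  assumes "finite A"
  shows "(cmod (\<Sum>u\<in>A. f u))\<^sup>2 \<le> real (card A) * (\<Sum>u\<in>A. (cmod (f u))\<^sup>2)"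
proof -
  have "cmod (\<Sum>u\<in>A. f u) \<le> (\<Sum>u\<in>A. cmod (f u))" by (rule norm_sum)
  then have "(cmod (\<Sum>u\<in>A. f u))\<^sup>2 \<le> (\<Sum>u\<in>A. cmod (f u))\<^sup>2" by (simp add: power_mono)
  also have "\<dots> \<le> (\<Sum>u\<in>A. (cmod (f u))\<^sup>2) * real (card A)" by (rule sum_squared_le_sum_of_squares)
  finally show ?thesis by (simp add: mult.commute)
qed


lemma coprime_add_mul:
  fixes a y :: int
  assumes "m > 0"
  shows "coprime (a + int m * y) (int m) \<longleftrightarrow> coprime a (int m)"
proof -
  have "(a + int m * y) mod int m = a mod int m" by simp
  then show ?thesis using coprime_mod_left_iff[of "int m" "a + int m * y"] coprime_mod_left_iff[of "int m" a] assms by simp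
qed

lemma crt_bound:
  fixes T :: "int \<Rightarrow> complex"
  assumes b: "b > 0" and s: "s > 0" and r: "r > 0" and bs: "coprime b s"
    and pr: "\<forall>p. prime p \<and> p dvd r \<longrightarrow> p dvd b"
    and per: "\<And>w. T w = T (w mod int (b * s))"
  shows "(\<Sum>z0\<in>U b. \<Sum>u\<in>U s. (cmod (T (int s * z0 + int b * int r * modinv u s)))\<^sup>2)
         \<le> (\<Sum>w\<in>U (b * s). (cmod (T w))\<^sup>2)"
proof -
  define g where "g p = (int s * fst p + int b * int r * modinv (snd p) s) mod int (b * s)" for p
  have bsi: "coprime (int s) (int b)" using bs by (simp add: coprime_commute)
  have rs: "coprime (int s) (int r)" using coprime_r[OF r pr bsi] .
  have brs: "coprime (int b * int r) (int s)" using bsi rs by (simp add: coprime_commute)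
  have inj: "inj_on g (U b \<times> U s)"
  proof (rule inj_onI)
    fix p q assume p: "p \<in> U b \<times> U s" and q: "q \<in> U b \<times> U s" and eq: "g p = g q"
    obtain z0 u where pz: "p = (z0, u)" by (cases p)
    obtain z0' u' where qz: "q = (z0', u')" by (cases q)
    have hp: "z0 \<in> U b" "u \<in> U s" using p pz by auto
    have hq: "z0' \<in> U b" "u' \<in> U s" using q qz by auto
    have c: "[int s * z0 + int b * (int r * modinv u s) = int s * z0' + int b * (int r * modinv u' s)] (mod int (b * s))"
      using eq pz qz unfolding g_def cong_def by (simp add: mult.assoc)
    have cb: "[int s * z0 + int b * (int r * modinv u s) = int s * z0' + int b * (int r * modinv u' s)] (mod int b)"
      using cong_dvd_modulus[OF c] by simp
    then have "[int s * z0 = int s * z0'] (mod int b)" unfolding cong_def by simp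
    then have "[z0 = z0'] (mod int b)" using cong_mult_lcancel[OF bsi] by blast
    then have z: "z0 = z0'" using hp hq cong_less_imp_eq_int by (auto simp: U_def)
    have c2: "[int b * int r * modinv u s + int s * z0 = int b * int r * modinv u' s + int s * z0'] (mod int s)"
      using cong_dvd_modulus[OF c] by (simp add: algebra_simps)
    then have "[int b * int r * modinv u s = int b * int r * modinv u' s] (mod int s)" unfolding cong_def by simp
    then have "[modinv u s = modinv u' s] (mod int s)" using cong_mult_lcancel[OF brs] by (simp add: mult.assoc)
    moreover have "modinv u s \<in> U s" "modinv u' s \<in> U s" using modinv_U(1)[OF s] hp hq by auto
    ultimately have "modinv u s = modinv u' s" using cong_less_imp_eq_int by (auto simp: U_def)
    then have "u = u'" using modinv_inj[OF s] hp hq by blast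
    then show "p = q" using z pz qz by simp
  qed
  have img: "g ` (U b \<times> U s) \<subseteq> U (b * s)"
  proof
    fix w assume "w \<in> g ` (U b \<times> U s)"
    then obtain z0 u where hz: "z0 \<in> U b" "u \<in> U s" and w: "w = g (z0, u)" by auto
    have m: "modinv u s \<in> U s" using modinv_U(1)[OF s hz(2)] .
    have c1: "coprime (int s * z0 + int b * (int r * modinv u s)) (int b)"
      using coprime_add_mul[OF b] bsi hz(1) by (simp add: U_def)
    have c2: "coprime (int b * int r * modinv u s + int s * z0) (int s)"
      using coprime_add_mul[OF s] brs m by (simp add: U_def)
    have "coprime (int s * z0 + int b * int r * modinv u s) (int b * int s)"
      using c1 c2 by (simp add: algebra_simps)
    then have "coprime ((int s * z0 + int b * int r * modinv u s) mod int (b * s)) (int (b * s))"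
      using b s by (subst coprime_mod_left_iff) auto
    then have "coprime w (int (b * s))" unfolding w g_def by simp
    moreover have "0 \<le> w" "w < int (b * s)" unfolding w g_def using b s by simp_all
    ultimately show "w \<in> U (b * s)" by (simp add: U_def)
  qed
  have "(\<Sum>z0\<in>U b. \<Sum>u\<in>U s. (cmod (T (int s * z0 + int b * int r * modinv u s)))\<^sup>2)
      = (\<Sum>p\<in>U b \<times> U s. (cmod (T (g p)))\<^sup>2)"
    by (simp only: sum.cartesian_product g_def per[symmetric]) (simp add: case_prod_beta)
  also have "\<dots> = (\<Sum>w\<in>g ` (U b \<times> U s). (cmod (T w))\<^sup>2)"
    using sum.reindex[OF inj, of "\<lambda>w. (cmod (T w))\<^sup>2"] by simp
  also have "\<dots> \<le> (\<Sum>w\<in>U (b * s). (cmod (T w))\<^sup>2)"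
    by (rule sum_mono2) (use img in auto)
  finally show ?thesis .
qed


theorem lemma11p4:
  fixes b s r N :: nat and a :: "nat \<Rightarrow> complex"
  assumes "b > 0" and "s > 0" and "r > 0"
    and "coprime b s"
    and "\<forall>p. prime p \<and> p dvd r \<longrightarrow> p dvd b"
  shows "(\<Sum>x\<in>{x\<in>{0..<int b}. coprime x (int b)}.
           (cmod (\<Sum>m\<in>{1..N}. a m * kloosterman 0 (int m) s
                                  * kloosterman (int r * x) (int m) (b * r)))\<^sup>2)
         \<le> real (b * r ^ 2 * s) *
           (\<Sum>x\<in>{x\<in>{0..<int (b * s)}. coprime x (int (b * s))}.
              (cmod (\<Sum>m\<in>{m\<in>{1..N}. r dvd m}.
                  a m * e (real_of_int x * real (m div r) / real (b * s))))\<^sup>2)"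
proof -
  note b = assms(1) and s = assms(2) and r = assms(3) and bs = assms(4) and pr = assms(5)
  define M where "M = {m\<in>{1..N}. r dvd m}"
  define T where "T w = (\<Sum>m\<in>M. a m * e (real_of_int w * real (m div r) / real (b * s)))" for w
  define H where "H z0 = (\<Sum>u\<in>U s. T (int s * z0 + int b * int r * modinv u s))" for z0
  define F where "F x z0 = e (real_of_int (x * modinv z0 b) / real b)" for x z0
  have finM: "finite M" unfolding M_def by simp
  have per: "T w = T (w mod int (b * s))" for w
    unfolding T_def
  proof (intro sum.cong refl arg_cong2[where f = "(*)"])
    fix m
    have "e (real_of_int (w * int (m div r)) / real (b * s)) = e (real_of_int ((w mod int (b * s)) * int (m div r)) / real (b * s))"
      using b s by (intro e_cong) (simp_all add: cong_def mod_mult_left_eq)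
    then show "e (real_of_int w * real (m div r) / real (b * s)) = e (real_of_int (w mod int (b * s)) * real (m div r) / real (b * s))"
      by simp
  qed
  have klo0: "kloosterman 0 (int m) s = (\<Sum>u\<in>U s. e (real_of_int (int m * modinv u s) / real s))" for m
    unfolding kloosterman_def U_def by simp
  have key: "e (real_of_int (int m * modinv u s) / real s) * e (real_of_int (int m * z0) / real (b * r))
        = e (real_of_int (int s * z0 + int b * int r * modinv u s) * real (m div r) / real (b * s))"
    if "m \<in> M" for m u z0
  proof -
    from that obtain n where n: "m = r * n" unfolding M_def by auto
    have md: "m div r = n" using n r by simp
    have "real_of_int (int m * modinv u s) / real s + real_of_int (int m * z0) / real (b * r)
        = real_of_int (int s * z0 + int b * int r * modinv u s) * real (m div r) / real (b * s)"
      unfolding md n using b s r by (simp add: field_simps)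
    then show ?thesis by (simp add: e_add[symmetric])
  qed
  have inner: "(\<Sum>m\<in>{1..N}. a m * kloosterman 0 (int m) s * kloosterman (int r * x) (int m) (b * r))
      = of_nat r * (\<Sum>z0\<in>U b. F x z0 * H z0)" for x
  proof -
    have "(\<Sum>m\<in>{1..N}. a m * kloosterman 0 (int m) s * kloosterman (int r * x) (int m) (b * r))
        = (\<Sum>m\<in>{1..N}. if r dvd m then of_nat r * (\<Sum>z0\<in>U b. \<Sum>u\<in>U s. F x z0 * (a m *
              (e (real_of_int (int m * modinv u s) / real s) * e (real_of_int (int m * z0) / real (b * r))))) else 0)"
      unfolding kl_split[OF b r pr] klo0 F_def
      by (intro sum.cong refl) (simp add: sum_distrib_left sum_distrib_right mult_ac)
    also have "\<dots> = (\<Sum>m\<in>M. of_nat r * (\<Sum>z0\<in>U b. \<Sum>u\<in>U s. F x z0 * (a m *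
              (e (real_of_int (int m * modinv u s) / real s) * e (real_of_int (int m * z0) / real (b * r))))))"
      unfolding M_def by (rule sum.inter_filter[symmetric]) simp
    also have "\<dots> = (\<Sum>m\<in>M. of_nat r * (\<Sum>z0\<in>U b. \<Sum>u\<in>U s. F x z0 * (a m *
              e (real_of_int (int s * z0 + int b * int r * modinv u s) * real (m div r) / real (b * s)))))"
    proof (rule sum.cong[OF refl])
      fix m assume m: "m \<in> M"
      show "of_nat r * (\<Sum>z0\<in>U b. \<Sum>u\<in>U s. F x z0 * (a m *
              (e (real_of_int (int m * modinv u s) / real s) * e (real_of_int (int m * z0) / real (b * r)))))
          = of_nat r * (\<Sum>z0\<in>U b. \<Sum>u\<in>U s. F x z0 * (a m *
              e (real_of_int (int s * z0 + int b * int r * modinv u s) * real (m div r) / real (b * s))))"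
        by (simp only: key[OF m])
    qed
    also have "\<dots> = of_nat r * (\<Sum>z0\<in>U b. F x z0 * H z0)"
      unfolding H_def T_def
      by (simp add: sum_distrib_left sum.swap[of _ M])
    finally show ?thesis .
  qed
  have Usub: "U b \<subseteq> {0..<int b}" unfolding U_def by auto
  have "(\<Sum>x\<in>U b. (cmod (\<Sum>m\<in>{1..N}. a m * kloosterman 0 (int m) s * kloosterman (int r * x) (int m) (b * r)))\<^sup>2)
      = (\<Sum>x\<in>U b. real r ^ 2 * (cmod (\<Sum>z0\<in>U b. F x z0 * H z0))\<^sup>2)"
    by (simp only: inner norm_mult power_mult_distrib norm_of_nat)
  also have "\<dots> \<le> (\<Sum>x\<in>{0..<int b}. real r ^ 2 * (cmod (\<Sum>z0\<in>U b. F x z0 * H z0))\<^sup>2)"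
    by (rule sum_mono2) (use Usub in auto)
  also have "\<dots> = real r ^ 2 * (real b * (\<Sum>z0\<in>U b. (cmod (H z0))\<^sup>2))"
  proof -
    have "(\<Sum>x\<in>{0..<int b}. (cmod (\<Sum>z0\<in>U b. F x z0 * H z0))\<^sup>2) = real b * (\<Sum>z0\<in>U b. (cmod (H z0))\<^sup>2)"
      unfolding F_def
    proof (rule ortho[OF b finite_U])
      show "\<forall>j\<in>U b. 0 \<le> modinv j b \<and> modinv j b < int b" using modinv_U(1)[OF b] by (auto simp: U_def)
      show "inj_on (\<lambda>z0. modinv z0 b) (U b)" by (rule inj_onI) (use modinv_inj[OF b] in blast)
    qed
    then show ?thesis by (simp add: sum_distrib_left[symmetric])
  qed
  also have "\<dots> \<le> real r ^ 2 * (real b * (\<Sum>z0\<in>U b. real s * (\<Sum>u\<in>U s. (cmod (T (int s * z0 + int b * int r * modinv u s)))\<^sup>2)))"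
  proof -
    have "(cmod (H z0))\<^sup>2 \<le> real s * (\<Sum>u\<in>U s. (cmod (T (int s * z0 + int b * int r * modinv u s)))\<^sup>2)" for z0
    proof -
      have "(cmod (H z0))\<^sup>2 \<le> real (card (U s)) * (\<Sum>u\<in>U s. (cmod (T (int s * z0 + int b * int r * modinv u s)))\<^sup>2)"
        unfolding H_def by (rule cs_sum) simp
      also have "\<dots> \<le> real s * (\<Sum>u\<in>U s. (cmod (T (int s * z0 + int b * int r * modinv u s)))\<^sup>2)"
        using card_U_le[of s] by (intro mult_right_mono) (auto intro: sum_nonneg)
      finally show ?thesis .
    qed
    then show ?thesis by (intro mult_left_mono sum_mono) auto
  qed
  also have "\<dots> = real r ^ 2 * real b * real s * (\<Sum>z0\<in>U b. \<Sum>u\<in>U s. (cmod (T (int s * z0 + int b * int r * modinv u s)))\<^sup>2)"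
    by (simp add: sum_distrib_left mult_ac)
  also have "\<dots> \<le> real r ^ 2 * real b * real s * (\<Sum>w\<in>U (b * s). (cmod (T w))\<^sup>2)"
    using crt_bound[OF b s r bs pr, of T] per by (intro mult_left_mono) auto
  finally show ?thesis unfolding U_def T_def M_def by (simp add: mult_ac)
qed

end
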